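(* Every 2-local 1-automorphism of a finite dimensional formally real exceptional simple Jordan algebra $\mathcal{A}$ is an automorphism.
   Context: A real Jordan algebra is formally real if $\sum_i a_i^2=0$ (finite sum) implies each $a_i=0$; $\mathcal{A}$ is unital with identity $1$. Exceptional means not isomorphic to a Jordan subalgebra of $R^+$ (product $\frac12(ab+ba)$) for an associative algebra $R$. A symmetry is $s$ with $s^2=1$, $U_s(x)=2s(sx)-x$. A 2-local 1-automorphism is a map $\Delta$ (not assumed linear) such that for every $x,y$ there is a symmetry $s$ with $\Delta(x)=U_s(x)$, $\Delta(y)=U_s(y)$. *)

theory Defs
  imports "HOL-Analysis.Analysis"
begin

definition jordan_algebra :: "('a::real_vector \<Rightarrow> 'a \<Rightarrow> 'a) \<Rightarrow> bool" where
  "jordan_algebra p \<longleftrightarrow>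
     bilinear p \<and>
     (\<forall>x y. p x y = p y x) \<and>
     (\<forall>x y. p (p x y) (p x x) = p x (p y (p x x)))"

definition jordan_unit :: "('a \<Rightarrow> 'a \<Rightarrow> 'a) \<Rightarrow> 'a \<Rightarrow> bool" where
  "jordan_unit p e \<longleftrightarrow> (\<forall>x. p e x = x \<and> p x e = x)"

definition formally_real :: "('a::real_vector \<Rightarrow> 'a \<Rightarrow> 'a) \<Rightarrow> bool" where
  "formally_real p \<longleftrightarrow>
     (\<forall>xs. sum_list (map (\<lambda>a. p a a) xs) = 0 \<longrightarrow> (\<forall>a\<in>set xs. a = 0))"

definition jordan_ideal :: "('a::real_vector \<Rightarrow> 'a \<Rightarrow> 'a) \<Rightarrow> 'a set \<Rightarrow> bool" where
  "jordan_ideal p I \<longleftrightarrow> subspace I \<and> (\<forall>a x. x \<in> I \<longrightarrow> p a x \<in> I)"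

definition simple_algebra :: "('a::real_vector \<Rightarrow> 'a \<Rightarrow> 'a) \<Rightarrow> bool" where
  "simple_algebra p \<longleftrightarrow>
     (\<exists>x y. p x y \<noteq> 0) \<and>
     (\<forall>I. jordan_ideal p I \<longrightarrow> I = {0} \<or> I = UNIV)"

definition assoc_real_algebra_on ::
  "'r set \<Rightarrow> 'r \<Rightarrow> ('r \<Rightarrow> 'r \<Rightarrow> 'r) \<Rightarrow> (real \<Rightarrow> 'r \<Rightarrow> 'r) \<Rightarrow> ('r \<Rightarrow> 'r \<Rightarrow> 'r) \<Rightarrow> bool" where
  "assoc_real_algebra_on S z add sm mul \<longleftrightarrow>
     z \<in> S \<and>
     (\<forall>a\<in>S. \<forall>b\<in>S. add a b \<in> S) \<and>
     (\<forall>c. \<forall>a\<in>S. sm c a \<in> S) \<and>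
     (\<forall>a\<in>S. \<forall>b\<in>S. mul a b \<in> S) \<and>
     (\<forall>a\<in>S. \<forall>b\<in>S. \<forall>c\<in>S. add (add a b) c = add a (add b c)) \<and>
     (\<forall>a\<in>S. \<forall>b\<in>S. add a b = add b a) \<and>
     (\<forall>a\<in>S. add z a = a) \<and>
     (\<forall>a\<in>S. \<exists>b\<in>S. add a b = z) \<and>
     (\<forall>c d. \<forall>a\<in>S. sm c (sm d a) = sm (c * d) a) \<and>
     (\<forall>a\<in>S. sm 1 a = a) \<and>
     (\<forall>c. \<forall>a\<in>S. \<forall>b\<in>S. sm c (add a b) = add (sm c a) (sm c b)) \<and>
     (\<forall>c d. \<forall>a\<in>S. sm (c + d) a = add (sm c a) (sm d a)) \<and>
     (\<forall>a\<in>S. \<forall>b\<in>S. \<forall>c\<in>S. mul (mul a b) c = mul a (mul b c)) \<and>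
     (\<forall>a\<in>S. \<forall>b\<in>S. \<forall>c\<in>S. mul a (add b c) = add (mul a b) (mul a c)) \<and>
     (\<forall>a\<in>S. \<forall>b\<in>S. \<forall>c\<in>S. mul (add a b) c = add (mul a c) (mul b c)) \<and>
     (\<forall>r. \<forall>a\<in>S. \<forall>b\<in>S. mul (sm r a) b = sm r (mul a b) \<and> mul a (sm r b) = sm r (mul a b))"

text \<open>\<open>p\<close> is special w.r.t. carriers in type \<open>'r\<close>: there is an associative real
algebra \<open>R\<close> (on a carrier in \<open>'r\<close>) and an injective linear map into \<open>R\<close> turning
\<open>p\<close> into the Jordan product \<open>(ab+ba)/2\<close>, i.e. \<open>A\<close> is isomorphic to a Jordan
subalgebra of \<open>R\<^sup>+\<close>.\<close>
definition special_in ::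
  "'r itself \<Rightarrow> ('a::real_vector \<Rightarrow> 'a \<Rightarrow> 'a) \<Rightarrow> bool" where
  "special_in _ p \<longleftrightarrow>
     (\<exists>(S::'r set) z add sm mul f.
        assoc_real_algebra_on S z add sm mul \<and>
        (\<forall>x. f x \<in> S) \<and> inj f \<and>
        (\<forall>x y. f (x + y) = add (f x) (f y)) \<and>
        (\<forall>c x. f (c *\<^sub>R x) = sm c (f x)) \<and>
        (\<forall>x y. f (p x y) = sm (1/2) (add (mul (f x) (f y)) (mul (f y) (f x)))))"

text \<open>The ambient carrier type is \<open>real\<close>, which has the
cardinality of the continuum; this is no restriction for finite-dimensional
\<open>A\<close>, since the subalgebra generated by the image of \<open>A\<close> in any associative
algebra has countable dimension, hence cardinality at most continuum.\<close>
definition exceptional :: "('a::real_vector \<Rightarrow> 'a \<Rightarrow> 'a) \<Rightarrow> bool" where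
  "exceptional p \<longleftrightarrow> \<not> special_in TYPE(real) p"

definition symmetry :: "('a \<Rightarrow> 'a \<Rightarrow> 'a) \<Rightarrow> 'a \<Rightarrow> 'a \<Rightarrow> bool" where
  "symmetry p e s \<longleftrightarrow> p s s = e"

definition U_op :: "('a::real_vector \<Rightarrow> 'a \<Rightarrow> 'a) \<Rightarrow> 'a \<Rightarrow> 'a \<Rightarrow> 'a" where
  "U_op p s x = 2 *\<^sub>R p s (p s x) - x"

definition two_local_1_automorphism ::
  "('a::real_vector \<Rightarrow> 'a \<Rightarrow> 'a) \<Rightarrow> 'a \<Rightarrow> ('a \<Rightarrow> 'a) \<Rightarrow> bool" where
  "two_local_1_automorphism p e \<Delta> \<longleftrightarrow>
     (\<forall>x y. \<exists>s. symmetry p e s \<and> \<Delta> x = U_op p s x \<and> \<Delta> y = U_op p s y)"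

definition jordan_automorphism :: "('a::real_vector \<Rightarrow> 'a \<Rightarrow> 'a) \<Rightarrow> ('a \<Rightarrow> 'a) \<Rightarrow> bool" where
  "jordan_automorphism p \<Phi> \<longleftrightarrow>
     linear \<Phi> \<and> bij \<Phi> \<and> (\<forall>x y. \<Phi> (p x y) = p (\<Phi> x) (\<Phi> y))"

end

theory Submission
  imports Defs "HOL-Computational_Algebra.Polynomial" "HOL-Computational_Algebra.Fundamental_Theorem_Algebra"
begin

lemma four_zero: "(D::'a::real_vector) + D + D + D = 0 \<Longrightarrow> D = 0"
proof -
  assume h: "D + D + D + D = 0"
  have "D + D + D + D = (1+1+1+1::real) *\<^sub>R D" by (simp only: scaleR_add_left scaleR_one)
  with h show ?thesis by simp
qed

lemma two_zero: "(D::'a::real_vector) + D = 0 \<Longrightarrow> D = 0"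
proof -
  assume h: "D + D = 0"
  have "D + D = (1+1::real) *\<^sub>R D" by (simp only: scaleR_add_left scaleR_one)
  with h show ?thesis by simp
qed

locale jalg =
  fixes p :: "'a::euclidean_space \<Rightarrow> 'a \<Rightarrow> 'a" and e :: 'a
  assumes bil: "bilinear p"
    and comm: "\<And>x y. p x y = p y x"
    and jid: "\<And>x y. p (p x y) (p x x) = p x (p y (p x x))"
    and unit: "\<And>x. p e x = x"
begin

lemma unit2[simp]: "p x e = x" using unit comm by metis

lemmas bl[simp] = bilinear_ladd[OF bil] bilinear_radd[OF bil] bilinear_lmul[OF bil]
  bilinear_rmul[OF bil] bilinear_lneg[OF bil] bilinear_rneg[OF bil]
  bilinear_lsub[OF bil] bilinear_rsub[OF bil] bilinear_lzero[OF bil] bilinear_rzero[OF bil]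

lemma unit1[simp]: "p e x = x" by (rule unit)

lemma L1: "p (p z y) (p x x) + p (p x y) (p x z) + p (p x y) (p x z) = p z (p y (p x x)) + p x (p y (p x z)) + p x (p y (p x z))"
proof -
  define F where "F = (\<lambda>x. p (p x y) (p x x) - p x (p y (p x x)))"
  have F0: "F u = 0" for u by (simp add: F_def jid)
  define D where "D = (p (p z y) (p x x) + p (p x y) (p x z) + p (p x y) (p x z)) - (p z (p y (p x x)) + p x (p y (p x z)) + p x (p y (p x z)))"
  have eq: "D + D = F (x+z) - F (x-z) - F z - F z"
    unfolding F_def D_def by (simp add: algebra_simps comm)
  have "D + D = 0" unfolding eq F0 by simp
  then have "D = 0" by (rule two_zero)
  then show ?thesis unfolding D_def by simp
qed

lemma L2: "p (p z y) (p x w) + p (p w y) (p x z) + p (p x y) (p w z) = p z (p y (p x w)) + p w (p y (p x z)) + p x (p y (p w z))"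
proof -
  define G where "G = (\<lambda>x. p (p z y) (p x x) + p (p x y) (p x z) + p (p x y) (p x z) - (p z (p y (p x x)) + p x (p y (p x z)) + p x (p y (p x z))))"
  have G0: "G u = 0" for u using L1[of z y u] by (simp add: G_def)
  define D where "D = (p (p z y) (p x w) + p (p w y) (p x z) + p (p x y) (p w z)) - (p z (p y (p x w)) + p w (p y (p x z)) + p x (p y (p w z)))"
  have eq: "D + D + D + D = G (x+w) - G (x-w)"
    unfolding G_def D_def by (simp add: algebra_simps comm)
  have "D + D + D + D = 0" unfolding eq G0 by simp
  then have "D = 0" by (rule four_zero)
  then show ?thesis unfolding D_def by simp
qed

context fixes s assumes ss: "p s s = e"
begin

lemma S1: "p (p s y) (p s w) = p s (p y (p s w))"
proof -
  have "p (p s y) (p s w) + p (p w y) (p s s) + p (p s y) (p w s) = p s (p y (p s w)) + p w (p y (p s s)) + p s (p y (p w s))"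
    by (rule L2)
  then have "p (p s y) (p s w) - p s (p y (p s w)) + (p (p s y) (p s w) - p s (p y (p s w))) = 0"
    by (simp add: ss comm[of w s] comm[of w y] algebra_simps)
  then have "p (p s y) (p s w) - p s (p y (p s w)) = 0" by (rule two_zero)
  then show ?thesis by simp
qed

lemma S3: "p (p s z) (p s w) + p (p s z) (p s w) + p w z = p z (p s (p s w)) + p w (p s (p s z)) + p s (p s (p w z))"
proof -
  have "p (p z s) (p s w) + p (p w s) (p s z) + p (p s s) (p w z) = p z (p s (p s w)) + p w (p s (p s z)) + p s (p s (p w z))"
    by (rule L2)
  then show ?thesis by (simp add: ss comm[of z s] comm[of w s] comm[of "p s w" "p s z"])
qed

lemma Scube: "p s (p s (p s w)) = p s w"
  using S1[of s w] by (simp add: ss)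

lemma SG: "p (p s (p s x)) (p s (p s y)) = p (p s x) (p s y)"
proof -
  have a: "p (p s (p s x)) (p s (p s y)) + p (p s (p s x)) (p s (p s y)) + p (p s y) (p s x) = p (p s x) (p s (p s (p s y))) + p (p s y) (p s (p s (p s x))) + p s (p s (p (p s y) (p s x)))"
    by (rule S3)
  have b: "p (p s x) (p s y) = p s (p x (p s y))" by (rule S1)
  have c: "p s (p s (p (p s y) (p s x))) = p (p s x) (p s y)"
    by (simp add: comm[of "p s y" "p s x"] b Scube)
  from a c have "(p (p s (p s x)) (p s (p s y)) - p (p s x) (p s y)) + (p (p s (p s x)) (p s (p s y)) - p (p s x) (p s y)) = 0"
    by (simp add: Scube comm[of "p s y" "p s x"] algebra_simps)
  then have "p (p s (p s x)) (p s (p s y)) - p (p s x) (p s y) = 0" by (rule two_zero)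
  then show ?thesis by simp
qed

lemma U2: "U_op p s (p x y) = p (U_op p s x) (U_op p s y)"
proof -
  have a: "p (p s x) (p s y) + p (p s x) (p s y) + p y x = p x (p s (p s y)) + p y (p s (p s x)) + p s (p s (p y x))"
    by (rule S3)
  define D where "D = p s (p s (p x y)) + p x (p s (p s y)) + p (p s (p s x)) y - (p x y + p (p s x) (p s y) + p (p s x) (p s y))"
  have D0: "D = 0" using a by (simp add: D_def comm[of y x] comm[of y "p s (p s x)"] algebra_simps)
  have "U_op p s (p x y) - p (U_op p s x) (U_op p s y) = D + D"
    unfolding U_op_def D_def using SG[of x y] by (simp add: algebra_simps scaleR_2)
  then show ?thesis using D0 by simp
qed

lemma U3: "U_op p s (U_op p s x) = x"
  unfolding U_op_def by (simp add: Scube algebra_simps scaleR_2)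

lemma U_linear: "linear (U_op p s)"
  by (rule linearI) (simp_all add: U_op_def algebra_simps)

end

end

definition tr :: "('a::euclidean_space \<Rightarrow> 'a) \<Rightarrow> real" where
  "tr M = (\<Sum>b\<in>Basis. M b \<bullet> b)"

lemma lin_expand: "linear M \<Longrightarrow> M x = (\<Sum>c\<in>Basis. (x \<bullet> c) *\<^sub>R M c)"
proof -
  assume l: "linear M"
  have "M x = M (\<Sum>c\<in>Basis. (x \<bullet> c) *\<^sub>R c)" by (simp add: euclidean_representation)
  also have "\<dots> = (\<Sum>c\<in>Basis. (x \<bullet> c) *\<^sub>R M c)"
    by (simp add: linear_sum[OF l] linear_scale[OF l])
  finally show ?thesis .
qed

lemma tr_comm:
  assumes "linear M" "linear N"
  shows "tr (\<lambda>x. M (N x)) = tr (\<lambda>x. N (M x))"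
proof -
  have "tr (\<lambda>x. M (N x)) = (\<Sum>b\<in>Basis. \<Sum>c\<in>Basis. (N b \<bullet> c) * (M c \<bullet> b))"
    unfolding tr_def by (subst lin_expand[OF assms(1)]) (simp add: inner_sum_left)
  also have "\<dots> = (\<Sum>c\<in>Basis. \<Sum>b\<in>Basis. (M c \<bullet> b) * (N b \<bullet> c))"
    by (subst sum.swap) (simp add: mult.commute)
  also have "\<dots> = tr (\<lambda>x. N (M x))"
    unfolding tr_def by (subst (2) lin_expand[OF assms(2)]) (simp add: inner_sum_left)
  finally show ?thesis .
qed

lemma tr_add: "tr (\<lambda>x. M x + N x) = tr M + tr N"
  by (simp add: tr_def inner_add_left sum.distrib)

lemma tr_diff: "tr (\<lambda>x. M x - N x) = tr M - tr N"
  by (simp add: tr_def inner_diff_left sum_subtractf)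

lemma tr_scale: "tr (\<lambda>x. c *\<^sub>R M x) = c * tr M"
  by (simp add: tr_def sum_distrib_left)

lemma tr_idem:
  fixes P :: "'a::euclidean_space \<Rightarrow> 'a"
  assumes lP: "linear P" and idem: "\<And>x. P (P x) = P x"
  shows "tr P \<ge> 0 \<and> ((\<exists>x. P x \<noteq> 0) \<longrightarrow> tr P > 0)"
proof -
  have sS: "subspace (range P)" unfolding subspace_def
  proof (intro conjI ballI allI)
    show "0 \<in> range P" using linear_0[OF lP] by (metis rangeI)
    fix x y assume "x \<in> range P" "y \<in> range P"
    then obtain u v where "x = P u" "y = P v" by auto
    then have "x + y = P (u + v)" using linear_add[OF lP, of u v] by simp
    then show "x + y \<in> range P" by blast
  next
    fix c x assume "x \<in> range P"
    then obtain u where "x = P u" by auto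
    then have "c *\<^sub>R x = P (c *\<^sub>R u)" using linear_scale[OF lP, of c u] by simp
    then show "c *\<^sub>R x \<in> range P" by blast
  qed
  obtain B where BS: "B \<subseteq> range P" and po: "pairwise orthogonal B"
    and nB: "\<And>x. x \<in> B \<Longrightarrow> norm x = 1" and iB: "independent B" and sB: "span B = range P"
    using orthonormal_basis_subspace[OF sS] by metis
  have fB: "finite B" using iB by (rule independent_imp_finite)
  define Q where "Q x = (\<Sum>u\<in>B. (x \<bullet> u) *\<^sub>R u)" for x
  have lQ: "linear Q" unfolding Q_def
    by (rule linearI) (simp_all add: inner_add_left scaleR_add_left sum.distrib scaleR_sum_right)
  have Qu: "Q x \<bullet> u = x \<bullet> u" if "u \<in> B" for x u
  proof -
    have "Q x \<bullet> u = (\<Sum>v\<in>B. (x \<bullet> v) * (v \<bullet> u))" by (simp add: Q_def inner_sum_left)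
    also have "\<dots> = (\<Sum>v\<in>B. if v = u then x \<bullet> u else 0)"
    proof (rule sum.cong)
      fix v assume v: "v \<in> B"
      show "(x \<bullet> v) * (v \<bullet> u) = (if v = u then x \<bullet> u else 0)"
      proof (cases "v = u")
        case True
        then have "v \<bullet> u = 1" using nB[OF that] by (simp add: dot_square_norm)
        then show ?thesis using True by simp
      next
        case False
        then have "v \<bullet> u = 0" using po v that by (auto simp: pairwise_def orthogonal_def)
        then show ?thesis using False by simp
      qed
    qed simp
    also have "\<dots> = x \<bullet> u" using fB that by simp
    finally show ?thesis .
  qed
  have QinS: "Q x \<in> span B" for x
    unfolding Q_def by (intro span_sum span_scale span_base)
  have Qfix: "Q y = y" if "y \<in> span B" for y
  proof -
    have z: "y - Q y \<in> span B" using that QinS by (simp add: span_diff)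
    have "orthogonal (y - Q y) a" if "a \<in> span B" for a
      by (rule orthogonal_to_span[OF that]) (simp add: orthogonal_def inner_diff_left Qu)
    from this[OF z] have "(y - Q y) \<bullet> (y - Q y) = 0" by (simp add: orthogonal_def)
    then show ?thesis by simp
  qed
  have PQ: "P (Q x) = Q x" for x
  proof -
    have "Q x \<in> range P" using QinS sB by auto
    then obtain z where "Q x = P z" by auto
    then show ?thesis by (simp add: idem)
  qed
  have QP: "Q (P x) = P x" for x using Qfix sB by auto
  have "tr P = tr (\<lambda>x. Q (P x))" using QP by simp
  also have "\<dots> = tr (\<lambda>x. P (Q x))" by (rule tr_comm[OF lQ lP])
  also have "\<dots> = tr Q" using PQ by simp
  also have "\<dots> = (\<Sum>u\<in>B. \<Sum>b\<in>Basis. (b \<bullet> u) * (u \<bullet> b))"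
    unfolding tr_def Q_def inner_sum_left by (subst sum.swap) simp
  also have "\<dots> = (\<Sum>u\<in>B. u \<bullet> u)"
  proof (rule sum.cong)
    fix u :: 'a
    show "(\<Sum>b\<in>Basis. (b \<bullet> u) * (u \<bullet> b)) = u \<bullet> u"
      by (subst (2) euclidean_inner) (simp add: inner_commute)
  qed simp
  also have "\<dots> = real (card B)"
    using nB by (simp add: dot_square_norm)
  finally have trP: "tr P = real (card B)" .
  show ?thesis
  proof
    show "tr P \<ge> 0" using trP by simp
    show "(\<exists>x. P x \<noteq> 0) \<longrightarrow> tr P > 0"
    proof
      assume "\<exists>x. P x \<noteq> 0"
      then obtain x where "P x \<noteq> 0" by auto
      then have "B \<noteq> {}" using sB span_empty by (metis rangeI singletonD)
      then show "tr P > 0" using trP fB by (simp add: card_gt_0_iff)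
    qed
  qed
qed

context jalg begin

lemma p_suml: "p (sum f S) y = (\<Sum>i\<in>S. p (f i) y)"
  by (induction S rule: infinite_finite_induct) simp_all

lemma p_sumr: "p y (sum f S) = (\<Sum>i\<in>S. p y (f i))"
  by (induction S rule: infinite_finite_induct) simp_all

primrec pw :: "'a \<Rightarrow> nat \<Rightarrow> 'a" where
  "pw a 0 = e"
| "pw a (Suc n) = p a (pw a n)"

lemma R: "p (p b (p a a)) w = p (p a b) (p a w) + p (p a b) (p a w) + p (p a a) (p b w) - p a (p b (p a w)) - p a (p b (p a w))"
proof -
  have "p (p a b) (p a w) + p (p w b) (p a a) + p (p a b) (p w a) = p a (p b (p a w)) + p w (p b (p a a)) + p a (p b (p w a))"
    by (rule L2)
  then show ?thesis by (simp add: comm[of w a] comm[of w b] comm[of w "p b (p a a)"] comm[of "p b w" "p a a"] algebra_simps)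
qed

lemma aa_comm: "p a (p (p a a) w) = p (p a a) (p a w)"
  using jid[of a w] by (simp add: comm[of w a] comm[of w "p a a"] comm[of "p a w" "p a a"])

lemma pw_aa: "p (p a a) (pw a n) = pw a (Suc (Suc n))"
  by (induction n) (simp_all add: aa_comm[symmetric])

lemma pw_comm_aux:
  "(\<forall>w. p (pw a n) (p a w) = p a (p (pw a n) w) \<and> p (pw a n) (p (p a a) w) = p (p a a) (p (pw a n) w)) \<and>
   (\<forall>w. p (pw a (Suc n)) (p a w) = p a (p (pw a (Suc n)) w) \<and> p (pw a (Suc n)) (p (p a a) w) = p (p a a) (p (pw a (Suc n)) w))"
proof (induction n)
  case 0
  then show ?case by (simp add: aa_comm)
next
  case (Suc n)
  then have c1: "\<And>w. p (pw a n) (p a w) = p a (p (pw a n) w)"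
    and c2: "\<And>w. p (pw a n) (p (p a a) w) = p (p a a) (p (pw a n) w)"
    and c3: "\<And>w. p (pw a (Suc n)) (p a w) = p a (p (pw a (Suc n)) w)"
    and c4: "\<And>w. p (pw a (Suc n)) (p (p a a) w) = p (p a a) (p (pw a (Suc n)) w)" by auto
  have L: "p (pw a (Suc (Suc n))) w = p (pw a (Suc n)) (p a w) + p (pw a (Suc n)) (p a w) + p (p a a) (p (pw a n) w) - p a (p (pw a n) (p a w)) - p a (p (pw a n) (p a w))" for w
  proof -
    have e1: "p (pw a (Suc (Suc n))) w = p (p (pw a n) (p a a)) w" using pw_aa[of a n] comm by metis
    show ?thesis unfolding e1 R by simp
  qed
  have c5: "p (pw a (Suc (Suc n))) (p a w) = p a (p (pw a (Suc (Suc n))) w)" for w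
    unfolding L by (simp add: c1 c3 aa_comm del: pw.simps(2))
  have c6: "p (pw a (Suc (Suc n))) (p (p a a) w) = p (p a a) (p (pw a (Suc (Suc n))) w)" for w
    unfolding L by (simp add: c1 c2 c3 c4 aa_comm del: pw.simps(2))
  show ?case using c3 c4 c5 c6 by blast
qed

lemma pw_comm: "p (pw a n) (p a w) = p a (p (pw a n) w)"
  using pw_comm_aux[of a n] by blast

lemma pw_add: "p (pw a m) (pw a n) = pw a (m + n)"
  by (induction n) (simp_all add: pw_comm)

lemma pw1[simp]: "pw a (Suc 0) = a" by simp

definition pev :: "'a \<Rightarrow> real poly \<Rightarrow> 'a" where
  "pev a q = (\<Sum>i\<le>degree q. coeff q i *\<^sub>R pw a i)"

lemma pev_ext: "degree q \<le> N \<Longrightarrow> pev a q = (\<Sum>i\<le>N. coeff q i *\<^sub>R pw a i)"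
  unfolding pev_def
  by (rule sum.mono_neutral_left) (auto simp: coeff_eq_0)

lemma pev_0[simp]: "pev a 0 = 0" by (simp add: pev_def)

lemma pev_add: "pev a (q + r) = pev a q + pev a r"
proof -
  let ?N = "max (degree q) (degree r)"
  have "degree (q + r) \<le> ?N" by (rule degree_add_le) auto
  then show ?thesis
    by (simp add: pev_ext[of _ ?N] scaleR_add_left sum.distrib)
qed

lemma pev_smult: "pev a (smult c q) = c *\<^sub>R pev a q"
  by (simp add: pev_ext[of _ "degree q"] scaleR_sum_right)

lemma pev_minus: "pev a (- q) = - pev a q"
  using pev_smult[of a "-1" q] by simp

lemma pev_diff: "pev a (q - r) = pev a q - pev a r"
  using pev_add[of a q "- r"] pev_minus[of a r] by simp

lemma pev_monom: "pev a (monom c k) = c *\<^sub>R pw a k"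
proof -
  have "pev a (monom c k) = (\<Sum>i\<le>k. coeff (monom c k) i *\<^sub>R pw a i)"
    by (rule pev_ext) (rule degree_monom_le)
  also have "\<dots> = (\<Sum>i\<le>k. if i = k then c *\<^sub>R pw a k else 0)"
    by (rule sum.cong) (auto simp: coeff_monom)
  also have "\<dots> = c *\<^sub>R pw a k" by simp
  finally show ?thesis .
qed

lemma pev_sum: "pev a (\<Sum>i\<in>S. f i) = (\<Sum>i\<in>S. pev a (f i))"
  by (induction S rule: infinite_finite_induct) (simp_all add: pev_add)

lemma pev_mult: "pev a (q * r) = p (pev a q) (pev a r)"
proof -
  have "q * r = (\<Sum>i\<le>degree q. monom (coeff q i) i) * (\<Sum>j\<le>degree r. monom (coeff r j) j)"
    by (simp add: poly_as_sum_of_monoms)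
  also have "\<dots> = (\<Sum>i\<le>degree q. \<Sum>j\<le>degree r. monom (coeff q i * coeff r j) (i + j))"
    by (simp add: sum_product mult_monom)
  finally have "pev a (q * r) = (\<Sum>i\<le>degree q. \<Sum>j\<le>degree r. (coeff q i * coeff r j) *\<^sub>R pw a (i + j))"
    by (simp add: pev_sum pev_monom)
  also have "\<dots> = p (pev a q) (pev a r)"
    unfolding pev_def p_suml p_sumr by (subst sum.swap) (simp add: pw_add mult.commute add.commute)
  finally show ?thesis .
qed

lemma pev_const: "pev a [:c:] = c *\<^sub>R e"
  by (simp add: pev_def)

lemma pev_one: "pev a 1 = e"
  by (simp add: pev_def)

lemma pev_x: "pev a [:0, 1:] = a"
  by (simp add: pev_def)

lemma pev_lin: "pev a [:c, 1:] = a + c *\<^sub>R e"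
proof -
  have "[:c, 1:] = [:c:] + [:0, 1:]" by simp
  then show ?thesis by (simp only: pev_add pev_const pev_x) simp
qed

end

lemma map_of_real_add: "map_poly (of_real :: real \<Rightarrow> complex) (p + q) = map_poly of_real p + map_poly of_real q"
  by (rule poly_eqI) (simp add: coeff_map_poly)

lemma map_of_real_mult: "map_poly (of_real :: real \<Rightarrow> complex) (p * q) = map_poly of_real p * map_poly of_real q"
  by (rule poly_eqI) (simp add: coeff_map_poly coeff_mult)

lemma poly_map_of_real: "poly (map_poly (of_real :: real \<Rightarrow> complex) p) (of_real x) = of_real (poly p x)"
  by (induction p) (auto simp: map_poly_pCons)

lemma degree_map_of_real: "degree (map_poly (of_real :: real \<Rightarrow> complex) p) = degree p"
  by (rule degree_map_poly) simp

lemma deg1_form: "degree (s::real poly) \<le> 1 \<Longrightarrow> s = [:coeff s 0, coeff s 1:]"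
  by (rule poly_eqI) (auto simp: coeff_pCons coeff_eq_0 split: nat.split)

locale fjalg = jalg +
  assumes fr: "formally_real p"
begin

lemma fr1: "p u u = 0 \<Longrightarrow> u = 0"
proof -
  assume h: "p u u = 0"
  have "sum_list (map (\<lambda>a. p a a) [u]) = 0" using h by simp
  then show "u = 0" using fr unfolding formally_real_def by (metis list.set_intros(1))
qed

lemma fr2: "p u u + p v v = 0 \<Longrightarrow> v = 0"
proof -
  assume h: "p u u + p v v = 0"
  have "sum_list (map (\<lambda>a. p a a) [u, v]) = 0" using h by simp
  then show "v = 0" using fr unfolding formally_real_def by (metis list.set_intros(1,2))
qed

lemma ex_ann: "\<exists>q. q \<noteq> 0 \<and> pev a q = 0"
proof (cases "inj_on (pw a) {..DIM('a)}")
  case False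
  then obtain i j where ij: "i \<le> DIM('a)" "j \<le> DIM('a)" "i \<noteq> j" "pw a i = pw a j"
    unfolding inj_on_def by auto
  let ?q = "monom 1 i - monom (1::real) j"
  have "coeff ?q i = 1" using ij(3) by (auto simp: coeff_monom)
  then have "?q \<noteq> 0" by (metis coeff_0 zero_neq_one)
  moreover have "pev a ?q = 0" using ij by (simp add: pev_diff pev_monom)
  ultimately show ?thesis by blast
next
  case True
  let ?S = "pw a ` {..DIM('a)}"
  have "card ?S = Suc DIM('a)" using True by (simp add: card_image)
  then have "\<not> independent ?S" using independent_bound[of ?S] by auto
  then obtain t u where t: "finite t" "t \<subseteq> ?S" "(\<Sum>v\<in>t. u v *\<^sub>R v) = 0" and v: "\<exists>v\<in>t. u v \<noteq> 0"
    unfolding dependent_explicit by auto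
  define c where "c i = (if pw a i \<in> t then u (pw a i) else 0)" for i
  let ?q = "\<Sum>i\<le>DIM('a). monom (c i) i"
  have coeffq: "coeff ?q k = (if k \<le> DIM('a) then c k else 0)" for k
    by (simp add: coeff_sum coeff_monom)
  obtain v where vt: "v \<in> t" "u v \<noteq> 0" using v by auto
  then obtain i where i: "i \<le> DIM('a)" "v = pw a i" using t by auto
  have "coeff ?q i \<noteq> 0" using coeffq[of i] i vt by (simp add: c_def)
  then have "?q \<noteq> 0" by auto
  moreover have "pev a ?q = 0"
  proof -
    have "pev a ?q = (\<Sum>i\<le>DIM('a). c i *\<^sub>R pw a i)" by (simp add: pev_sum pev_monom)
    also have "\<dots> = (\<Sum>i\<in>{i. i \<le> DIM('a) \<and> pw a i \<in> t}. u (pw a i) *\<^sub>R pw a i)"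
      by (rule sum.mono_neutral_cong_right) (auto simp: c_def)
    also have "\<dots> = (\<Sum>v\<in>pw a ` {i. i \<le> DIM('a) \<and> pw a i \<in> t}. u v *\<^sub>R v)"
    proof -
      have "inj_on (pw a) {i. i \<le> DIM('a) \<and> pw a i \<in> t}"
        using True by (rule inj_on_subset) auto
      then show ?thesis by (simp add: sum.reindex)
    qed
    also have "pw a ` {i. i \<le> DIM('a) \<and> pw a i \<in> t} = t" using t(2) by auto
    finally show ?thesis using t(3) by simp
  qed
  ultimately show ?thesis by blast
qed

lemma ex_minpoly: "\<exists>m. m \<noteq> 0 \<and> pev a m = 0 \<and> (\<forall>r. r \<noteq> 0 \<and> degree r < degree m \<longrightarrow> pev a r \<noteq> 0)"
proof -
  define P where "P d = (\<exists>q. q \<noteq> 0 \<and> pev a q = 0 \<and> degree q = d)" for d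
  have "\<exists>d. P d" using ex_ann[of a] unfolding P_def by auto
  then obtain d where d: "P d" "\<And>d'. d' < d \<Longrightarrow> \<not> P d'" using exists_least_iff[of P] by auto
  then obtain m where "m \<noteq> 0" "pev a m = 0" "degree m = d" unfolding P_def by auto
  then show ?thesis using d(2) unfolding P_def by blast
qed

end

lemma prod_dvd_vanish:
  fixes q :: "real poly"
  assumes "finite L" "\<forall>x\<in>L. poly q x = 0"
  shows "(\<Prod>x\<in>L. [:-x, 1:]) dvd q"
  using assms
proof (induction L arbitrary: q rule: finite_induct)
  case empty
  then show ?case by simp
next
  case (insert y F)
  have "poly q y = 0" using insert.prems by simp
  then obtain q' where q': "q = [:-y, 1:] * q'" using poly_eq_0_iff_dvd by (metis dvdE)
  have "\<forall>x\<in>F. poly q' x = 0"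
  proof
    fix x assume x: "x \<in> F"
    then have "x \<noteq> y" using insert.hyps by auto
    moreover have "poly q x = 0" using insert.prems x by simp
    ultimately show "poly q' x = 0" using q' by simp
  qed
  then have "(\<Prod>x\<in>F. [:-x, 1:]) dvd q'" by (rule insert.IH)
  then show ?case unfolding prod.insert[OF insert.hyps] q' by (rule mult_dvd_mono[OF dvd_refl])
qed

context fjalg begin

context
  fixes a m
  assumes m0: "m \<noteq> 0" and ma: "pev a m = 0"
    and mmin: "\<And>r. r \<noteq> 0 \<Longrightarrow> degree r < degree m \<Longrightarrow> pev a r \<noteq> 0"
begin

lemma RR: "\<not> ([:-c, 1:] * [:-c, 1:]) dvd m"
proof
  assume "([:-c, 1:] * [:-c, 1:]) dvd m"
  then obtain k where k: "m = [:-c, 1:] * [:-c, 1:] * k" by (auto elim: dvdE)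
  define h where "h = [:-c, 1:] * k"
  have "h * h = m * k" unfolding h_def k by (simp only: mult.assoc mult.commute mult.left_commute)
  then have "p (pev a h) (pev a h) = 0" using ma by (metis pev_mult bl(9))
  then have ph: "pev a h = 0" by (rule fr1)
  have k0: "k \<noteq> 0" using m0 k by auto
  have l0: "[:-c, 1:] \<noteq> 0" by simp
  have ll0: "[:-c, 1:] * [:-c, 1:] \<noteq> 0" using l0 by (metis mult_eq_0_iff)
  have h0: "h \<noteq> 0" unfolding h_def using l0 k0 by (metis mult_eq_0_iff)
  have "degree h = degree [:-c, 1:] + degree k" unfolding h_def by (rule degree_mult_eq[OF l0 k0])
  moreover have "degree m = degree [:-c, 1:] + degree [:-c, 1:] + degree k"
    unfolding k by (simp only: degree_mult_eq[OF ll0 k0] degree_mult_eq[OF l0 l0])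
  ultimately have "degree h < degree m" by simp
  then show False using mmin h0 ph by blast
qed

lemma NR: "poly (map_poly of_real m) z = 0 \<Longrightarrow> Im z = 0"
proof (rule ccontr)
  assume z: "poly (map_poly of_real m) z = 0" and nz: "Im z \<noteq> 0"
  define \<alpha> where "\<alpha> = Re z"
  define \<beta> where "\<beta> = Im z"
  define g where "g = [:\<alpha> * \<alpha> + \<beta> * \<beta>, - 2 * \<alpha>, 1:]"
  have g0: "g \<noteq> 0" unfolding g_def by simp
  have gz: "poly (map_poly of_real g) z = 0"
    unfolding g_def \<alpha>_def \<beta>_def
    by (simp add: map_poly_pCons complex_eq_iff algebra_simps power2_eq_square)
  define s where "s = m mod g"
  define q where "q = m div g"
  have mgq: "m = g * q + s" unfolding s_def q_def by simp
  have sz: "poly (map_poly of_real s) z = 0"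
    using z gz unfolding mgq by (simp add: map_of_real_add map_of_real_mult)
  have "s = 0"
  proof (cases "s = 0")
    case False
    then have "degree s < degree g" using degree_mod_less[OF g0, of m] s_def by auto
    then have "degree s \<le> 1" unfolding g_def by simp
    then have sf: "s = [:coeff s 0, coeff s 1:]" by (rule deg1_form)
    have "of_real (coeff s 0) + z * of_real (coeff s 1) = 0"
      using sz by (subst (asm) sf) (simp add: map_poly_pCons)
    then have "Im z * coeff s 1 = 0" "coeff s 0 + Re z * coeff s 1 = 0"
      by (simp_all add: complex_eq_iff)
    then have "coeff s 1 * Im z = 0" "coeff s 0 + coeff s 1 * Re z = 0"
      by (simp_all add: mult.commute)
    then have "coeff s 1 = 0" "coeff s 0 = 0" using nz by auto
    then have "s = 0" using sf by simp
    then show ?thesis by simp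
  qed simp
  then have mgq': "m = g * q" using mgq by simp
  have q0: "q \<noteq> 0" using m0 mgq' by auto
  have "degree m = degree g + degree q" unfolding mgq' by (rule degree_mult_eq[OF g0 q0])
  moreover have "degree g = 2" unfolding g_def by simp
  ultimately have dq: "degree q < degree m" by simp
  define X where "X = [:-\<alpha>, 1:]"
  define B where "B = [:\<beta>:]"
  define h1 where "h1 = X * q"
  define h2 where "h2 = B * q"
  have "h1 * h1 + h2 * h2 = (X * X + B * B) * q * q"
    unfolding h1_def h2_def by (simp add: algebra_simps)
  also have "X * X + B * B = g"
    unfolding g_def X_def B_def by (simp add: algebra_simps)
  finally have "h1 * h1 + h2 * h2 = m * q" using mgq' by (simp add: algebra_simps)
  then have "p (pev a h1) (pev a h1) + p (pev a h2) (pev a h2) = 0"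
    using ma by (metis pev_mult pev_add bl(9))
  then have "pev a h2 = 0" by (rule fr2)
  then have "pev a q = 0" using nz unfolding h2_def B_def \<beta>_def by (simp add: pev_mult pev_const pev_smult)
  then show False using mmin[OF q0 dq] by simp
qed

definition Lam where "Lam = {x. poly m x = 0}"

lemma Lam_fin: "finite Lam" unfolding Lam_def using m0 by (rule poly_roots_finite)

lemma pi_ann: "pev a (\<Prod>x\<in>Lam. [:-x, 1:]) = 0"
proof -
  obtain L where LL: "L = Lam" by blast
  have Lfin: "finite L" using Lam_fin LL by simp
  have Lmem: "x \<in> L \<longleftrightarrow> poly m x = 0" for x using LL by (simp add: Lam_def)
  let ?pi = "\<Prod>x\<in>L. [:-x, 1:]"
  have "?pi dvd m" by (rule prod_dvd_vanish[OF Lfin]) (simp add: Lmem)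
  then obtain r where r: "m = ?pi * r" by (auto elim: dvdE)
  have r0: "r \<noteq> 0" using r m0 by auto
  have "degree r = 0"
  proof (rule ccontr)
    assume "degree r \<noteq> 0"
    then have "\<not> constant (poly (map_poly (of_real :: real \<Rightarrow> complex) r))"
      by (simp add: constant_degree degree_map_of_real)
    then obtain z :: complex where z: "poly (map_poly of_real r) z = 0" using fundamental_theorem_of_algebra by blast
    have "poly (map_poly of_real m) z = poly (map_poly of_real ?pi) z * poly (map_poly of_real r) z"
      by (subst r) (simp only: map_of_real_mult poly_mult)
    then have zm: "poly (map_poly of_real m) z = 0" using z by simp
    then have "Im z = 0" by (rule NR)
    then have zr: "z = of_real (Re z)" by (simp add: complex_eq_iff)
    have rr: "poly r (Re z) = 0" using z zr poly_map_of_real[of r "Re z"] by simp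
    have "poly m (Re z) = 0" by (subst r) (simp only: poly_mult rr mult_zero_right)
    then have inL: "Re z \<in> L" by (simp add: Lmem)
    have d1: "[:-Re z, 1:] dvd ?pi" by (rule dvd_prod_eqI[OF Lfin inL]) simp
    have d2: "[:-Re z, 1:] dvd r" using rr poly_eq_0_iff_dvd by blast
    have "([:-Re z, 1:] * [:-Re z, 1:]) dvd m" unfolding r using d1 d2 by (rule mult_dvd_mono)
    then show False using RR by blast
  qed
  then obtain c where c: "r = [:c:]" by (metis degree_eq_zeroE)
  then have c0: "c \<noteq> 0" using r0 by auto
  have "m = smult c ?pi" using r c by simp
  then have "c *\<^sub>R pev a ?pi = 0" using ma by (simp add: pev_smult)
  then show ?thesis using c0 LL by simp
qed

lemma vanish: "(\<forall>x. poly m x = 0 \<longrightarrow> poly q x = 0) \<Longrightarrow> pev a q = 0"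
proof -
  assume h: "\<forall>x. poly m x = 0 \<longrightarrow> poly q x = 0"
  then have "\<forall>x\<in>Lam. poly q x = 0" by (simp add: Lam_def)
  then have "(\<Prod>x\<in>Lam. [:-x, 1:]) dvd q" by (rule prod_dvd_vanish[OF Lam_fin])
  then obtain k where "q = (\<Prod>x\<in>Lam. [:-x, 1:]) * k" by (auto elim: dvdE)
  then show ?thesis using pi_ann by (simp add: pev_mult)
qed

end
end

context fjalg begin

definition tau where "tau z = tr (p z)"

lemma p_lin: "linear (p z)"
  using bil unfolding bilinear_def by blast

lemma tau_add: "tau (u + v) = tau u + tau v"
proof -
  have "p (u + v) = (\<lambda>w. p u w + p v w)" by (rule ext) simp
  then show ?thesis unfolding tau_def by (simp add: tr_add)
qed

lemma tau_scale: "tau (c *\<^sub>R u) = c * tau u"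
proof -
  have "p (c *\<^sub>R u) = (\<lambda>w. c *\<^sub>R p u w)" by (rule ext) simp
  then show ?thesis unfolding tau_def by (simp add: tr_scale)
qed

lemma tau_zero: "tau 0 = 0"
  using tau_scale[of 0 0] by simp

lemma tau_diff: "tau (u - v) = tau u - tau v"
  using tau_add[of u "(-1) *\<^sub>R v"] tau_scale[of "-1" v] by simp

lemma tau_sum: "tau (\<Sum>i\<in>S. f i) = (\<Sum>i\<in>S. tau (f i))"
  by (induction S rule: infinite_finite_induct) (simp_all add: tau_zero tau_add)

lemma tau_idem:
  assumes EE: "p E E = E"
  shows "tau E \<ge> 0 \<and> (E \<noteq> 0 \<longrightarrow> tau E > 0)"
proof -
  have cub0: "p E w = p E (p E w) + p E (p E w) + p E (p E w) - p E (p E (p E w)) - p E (p E (p E w))" for w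
    using R[of E E w] by (simp add: EE)
  have cub: "p E (p E (p E w)) = (3/2) *\<^sub>R p E (p E w) - (1/2) *\<^sub>R p E w" for w
  proof -
    let ?X = "p E (p E (p E w))" and ?Y = "p E (p E w)" and ?Z = "p E w"
    have "?X + ?X - (?Y + ?Y + ?Y - ?Z) = ?Z - (?Y + ?Y + ?Y - ?X - ?X)" by (simp add: algebra_simps)
    also have "?Z - (?Y + ?Y + ?Y - ?X - ?X) = 0" using cub0[of w] by simp
    finally have h: "?X + ?X = ?Y + ?Y + ?Y - ?Z" by simp
    have "?X = (1/2) *\<^sub>R (?X + ?X)" by (simp add: scaleR_2[symmetric])
    also have "\<dots> = (1/2) *\<^sub>R (?Y + ?Y + ?Y - ?Z)" by (simp only: h)
    also have "?Y + ?Y + ?Y = (1 + 1 + 1 :: real) *\<^sub>R ?Y" by (simp only: scaleR_add_left scaleR_one)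
    finally show ?thesis by (simp add: algebra_simps)
  qed
  define P1 where "P1 w = 2 *\<^sub>R p E (p E w) - p E w" for w
  define P2 where "P2 w = 4 *\<^sub>R p E w - 4 *\<^sub>R p E (p E w)" for w
  have lE: "linear (p E)" by (rule p_lin)
  have l1: "linear P1" unfolding P1_def by (rule linearI) (simp_all add: algebra_simps)
  have l2: "linear P2" unfolding P2_def by (rule linearI) (simp_all add: algebra_simps)
  have i1: "P1 (P1 w) = P1 w" for w unfolding P1_def
    apply (simp add: cub)
    apply (rule euclidean_eqI)
    apply (simp add: inner_add_left inner_diff_left algebra_simps)
    done
  have i2: "P2 (P2 w) = P2 w" for w unfolding P2_def
    apply (simp add: cub)
    apply (rule euclidean_eqI)
    apply (simp add: inner_add_left inner_diff_left algebra_simps)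
    done
  have dec: "p E = (\<lambda>w. P1 w + (1/2) *\<^sub>R P2 w)" by (rule ext) (simp add: P1_def P2_def algebra_simps scaleR_2)
  have t: "tau E = tr P1 + (1/2) * tr P2" unfolding tau_def dec by (simp add: tr_add tr_scale)
  have t1: "tr P1 \<ge> 0 \<and> ((\<exists>x. P1 x \<noteq> 0) \<longrightarrow> tr P1 > 0)" by (rule tr_idem[OF l1 i1])
  have t2: "tr P2 \<ge> 0" using tr_idem[OF l2 i2] by simp
  have PE: "P1 E = E" unfolding P1_def by (simp add: EE scaleR_2)
  show ?thesis
  proof
    show "tau E \<ge> 0" using t t1 t2 by simp
    show "E \<noteq> 0 \<longrightarrow> tau E > 0"
    proof
      assume "E \<noteq> 0"
      then have "tr P1 > 0" using t1 PE by metis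
      then show "tau E > 0" using t t2 by simp
    qed
  qed
qed

end

context fjalg begin

context
  fixes a m
  assumes m0: "m \<noteq> 0" and ma: "pev a m = 0"
    and mmin: "\<And>r. r \<noteq> 0 \<Longrightarrow> degree r < degree m \<Longrightarrow> pev a r \<noteq> 0"
begin

definition LL where "LL = {x. poly m x = 0}"

lemma LL_fin: "finite LL" unfolding LL_def using m0 by (rule poly_roots_finite)

lemma vanishL:
  assumes "\<And>x. x \<in> LL \<Longrightarrow> poly q x = 0" shows "pev a q = 0"
proof -
  have "\<forall>x. poly m x = 0 \<longrightarrow> poly q x = 0" using assms by (simp add: LL_def)
  then show ?thesis using vanish m0 ma mmin by blast
qed

definition ell where "ell x = smult (inverse (\<Prod>y\<in>LL-{x}. (x - y))) (\<Prod>y\<in>LL-{x}. [:-y, 1:])"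

lemma poly_ell: "x \<in> LL \<Longrightarrow> t \<in> LL \<Longrightarrow> poly (ell x) t = (if t = x then 1 else 0)"
proof -
  assume x: "x \<in> LL" and t: "t \<in> LL"
  have fin: "finite (LL - {x})" using LL_fin by simp
  have pe: "poly (ell x) t = inverse (\<Prod>y\<in>LL-{x}. (x - y)) * (\<Prod>y\<in>LL-{x}. (t - y))"
    unfolding ell_def by (simp add: poly_prod)
  show ?thesis
  proof (cases "t = x")
    case True
    have "(\<Prod>y\<in>LL-{x}. (x - y)) \<noteq> 0" using fin by (simp add: prod_zero_iff)
    then show ?thesis using pe True by simp
  next
    case False
    then have "t \<in> LL - {x}" using t by simp
    then have "(\<Prod>y\<in>LL-{x}. (t - y)) = 0" using fin by (simp add: prod_zero_iff)
    then show ?thesis using pe False by simp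
  qed
qed

definition EE where "EE x = pev a (ell x)"

lemma EE_idem: "x \<in> LL \<Longrightarrow> p (EE x) (EE x) = EE x"
proof -
  assume x: "x \<in> LL"
  have "pev a (ell x * ell x - ell x) = 0"
    by (rule vanishL) (simp add: poly_ell[OF x])
  then show ?thesis unfolding EE_def by (simp add: pev_diff pev_mult)
qed

lemma sum_ell: "t \<in> LL \<Longrightarrow> (\<Sum>x\<in>LL. f x * poly (ell x) t) = f t"
proof -
  assume t: "t \<in> LL"
  have "(\<Sum>x\<in>LL. f x * poly (ell x) t) = (\<Sum>x\<in>LL. if x = t then f t else 0)"
    by (rule sum.cong) (auto simp: poly_ell t)
  also have "\<dots> = f t" using LL_fin t by simp
  finally show ?thesis .
qed

lemma a_dec: "a = (\<Sum>x\<in>LL. x *\<^sub>R EE x)"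
proof -
  have "pev a ([:0, 1:] - (\<Sum>x\<in>LL. smult x (ell x))) = 0"
    by (rule vanishL) (simp add: poly_sum sum_ell[where f = "\<lambda>x. x"])
  then show ?thesis unfolding EE_def by (simp add: pev_diff pev_x pev_sum pev_smult)
qed

lemma aa_dec: "p a a = (\<Sum>x\<in>LL. (x * x) *\<^sub>R EE x)"
proof -
  have "pev a ([:0, 1:] * [:0, 1:] - (\<Sum>x\<in>LL. smult (x * x) (ell x))) = 0"
    by (rule vanishL) (simp add: poly_sum sum_ell[where f = "\<lambda>x. x * x"])
  then have "pev a ([:0, 1:] * [:0, 1:]) = pev a (\<Sum>x\<in>LL. smult (x * x) (ell x))"
    by (simp only: pev_diff right_minus_eq)
  then show ?thesis unfolding EE_def by (simp only: pev_mult pev_x) (simp add: pev_sum pev_smult)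
qed

lemma pos_aux: "a \<noteq> 0 \<Longrightarrow> tau (p a a) > 0"
proof -
  assume a0: "a \<noteq> 0"
  have "\<exists>x\<in>LL. x *\<^sub>R EE x \<noteq> 0"
  proof (rule ccontr)
    assume "\<not> ?thesis"
    then have "(\<Sum>x\<in>LL. x *\<^sub>R EE x) = 0" by (intro sum.neutral) auto
    then show False using a_dec a0 by simp
  qed
  then obtain x0 where x0: "x0 \<in> LL" "x0 \<noteq> 0" "EE x0 \<noteq> 0" by auto
  have nn: "\<forall>x\<in>LL. 0 \<le> (x * x) * tau (EE x)"
    using tau_idem EE_idem by (simp add: mult_nonneg_nonneg)
  have "0 < x0 * x0" using x0(2) by (metis not_real_square_gt_zero)
  moreover have "0 < tau (EE x0)" using tau_idem[OF EE_idem[OF x0(1)]] x0 by simp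
  ultimately have "0 < (x0 * x0) * tau (EE x0)" by (rule mult_pos_pos)
  also have "\<dots> \<le> (\<Sum>x\<in>LL. (x * x) * tau (EE x))"
    by (rule member_le_sum[OF x0(1)]) (use nn LL_fin in auto)
  also have "\<dots> = tau (p a a)" unfolding aa_dec by (simp add: tau_sum tau_scale)
  finally show ?thesis .
qed

end

lemma tau_pos: "a \<noteq> 0 \<Longrightarrow> tau (p a a) > 0"
  using ex_minpoly[of a] pos_aux by blast

end

context fjalg begin

lemma tau_U:
  assumes ss: "p s s = e"
  shows "tau (U_op p s z) = tau z"
proof -
  let ?U = "U_op p s"
  have lU: "linear ?U" by (rule U_linear[OF ss])
  have lN: "linear (\<lambda>w. p z (?U w))" using linear_compose[OF lU p_lin[of z]] by (simp add: o_def)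
  have eq: "p (?U z) = (\<lambda>w. ?U (p z (?U w)))"
    by (rule ext) (simp add: U2[OF ss] U3[OF ss])
  have "tau (?U z) = tr (\<lambda>w. ?U (p z (?U w)))" unfolding tau_def eq ..
  also have "\<dots> = tr (\<lambda>w. p z (?U (?U w)))" by (rule tr_comm[OF lU lN])
  also have "\<dots> = tau z" unfolding tau_def by (simp add: U3[OF ss])
  finally show ?thesis .
qed

definition BB where "BB u v = tau (p u v)"

lemma BB_add_l: "BB (u + v) w = BB u w + BB v w" by (simp add: BB_def tau_add)
lemma BB_add_r: "BB w (u + v) = BB w u + BB w v" by (simp add: BB_def tau_add)
lemma BB_diff_l: "BB (u - v) w = BB u w - BB v w" by (simp add: BB_def tau_diff)
lemma BB_diff_r: "BB w (u - v) = BB w u - BB w v" by (simp add: BB_def tau_diff)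
lemma BB_scale_l: "BB (c *\<^sub>R u) w = c * BB u w" by (simp add: BB_def tau_scale)
lemma BB_scale_r: "BB w (c *\<^sub>R u) = c * BB w u" by (simp add: BB_def tau_scale)
lemma BB_comm: "BB u v = BB v u" by (simp add: BB_def comm)

lemma BB_pos: "BB w w = 0 \<Longrightarrow> w = 0"
  using tau_pos[of w] unfolding BB_def by force

lemma main:
  assumes tl: "two_local_1_automorphism p e D"
  shows "jordan_automorphism p D"
proof -
  have loc: "\<exists>s. p s s = e \<and> D x = U_op p s x \<and> D y = U_op p s y" for x y
    using tl unfolding two_local_1_automorphism_def symmetry_def by blast
  have Binv[simp]: "BB (D u) (D v) = BB u v" for u v
  proof -
    obtain s where s: "p s s = e" "D u = U_op p s u" "D v = U_op p s v" using loc by blast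
    have "BB (D u) (D v) = tau (U_op p s (p u v))" unfolding BB_def s(2,3) U2[OF s(1)] ..
    also have "\<dots> = BB u v" unfolding BB_def by (rule tau_U[OF s(1)])
    finally show ?thesis .
  qed
  have add: "D (x + y) = D x + D y" for x y
  proof -
    let ?w = "D (x + y) - D x - D y"
    have e3: "BB (A - X - Y) (A - X - Y) = BB A A + BB X X + BB Y Y - 2 * BB A X - 2 * BB A Y + 2 * BB X Y" for A X Y
      by (simp add: BB_diff_l BB_diff_r BB_add_l BB_add_r BB_comm[of X A] BB_comm[of Y A] BB_comm[of Y X] algebra_simps)
    have "BB ?w ?w = BB (x + y) (x + y) + BB x x + BB y y - 2 * BB (x + y) x - 2 * BB (x + y) y + 2 * BB x y"
      by (simp only: e3 Binv)
    also have "\<dots> = 0" by (simp add: BB_add_l BB_add_r BB_comm[of y x] algebra_simps)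
    finally have "BB ?w ?w = 0" .
    then have "?w = 0" by (rule BB_pos)
    then show ?thesis by (simp add: algebra_simps)
  qed
  have scl: "D (c *\<^sub>R x) = c *\<^sub>R D x" for c x
  proof -
    let ?w = "D (c *\<^sub>R x) - c *\<^sub>R D x"
    have e2: "BB (A - c *\<^sub>R X) (A - c *\<^sub>R X) = BB A A - 2 * c * BB A X + c * c * BB X X" for A X
      by (simp add: BB_diff_l BB_diff_r BB_scale_l BB_scale_r BB_comm[of X A] algebra_simps)
    have "BB ?w ?w = BB (c *\<^sub>R x) (c *\<^sub>R x) - 2 * c * BB (c *\<^sub>R x) x + c * c * BB x x"
      by (simp only: e2 Binv)
    also have "\<dots> = 0" by (simp add: BB_scale_l BB_scale_r algebra_simps)
    finally have "BB ?w ?w = 0" .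
    then have "?w = 0" by (rule BB_pos)
    then show ?thesis by simp
  qed
  have lD: "linear D" by (rule linearI[OF add scl])
  have sq: "D (p x x) = p (D x) (D x)" for x
  proof -
    obtain s where s: "p s s = e" "D x = U_op p s x" "D (p x x) = U_op p s (p x x)" using loc by blast
    show ?thesis unfolding s(2,3) by (rule U2[OF s(1)])
  qed
  have mul: "D (p x y) = p (D x) (D y)" for x y
  proof -
    have l: "p (x + y) (x + y) = p x x + p x y + p x y + p y y" by (simp add: comm[of y x] algebra_simps)
    have r: "p (D x + D y) (D x + D y) = p (D x) (D x) + p (D x) (D y) + p (D x) (D y) + p (D y) (D y)"
      by (simp add: comm[of "D y" "D x"] algebra_simps)
    have "D (p x x) + D (p x y) + D (p x y) + D (p y y) = D (p (x + y) (x + y))" by (simp only: l add)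
    also have "\<dots> = p (D (x + y)) (D (x + y))" by (rule sq)
    also have "\<dots> = p (D x) (D x) + p (D x) (D y) + p (D x) (D y) + p (D y) (D y)" by (simp only: add r)
    finally have E: "p (D x) (D x) + D (p x y) + D (p x y) + p (D y) (D y) = p (D x) (D x) + p (D x) (D y) + p (D x) (D y) + p (D y) (D y)"
      by (simp only: sq)
    have "D (p x y) - p (D x) (D y) + (D (p x y) - p (D x) (D y)) =
      (p (D x) (D x) + D (p x y) + D (p x y) + p (D y) (D y)) - (p (D x) (D x) + p (D x) (D y) + p (D x) (D y) + p (D y) (D y))"
      by (simp add: algebra_simps)
    then have "D (p x y) - p (D x) (D y) + (D (p x y) - p (D x) (D y)) = 0" using E by simp
    then have "D (p x y) - p (D x) (D y) = 0" by (rule two_zero)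
    then show ?thesis by simp
  qed
  have inj: "inj D"
  proof (rule injI)
    fix x y assume "D x = D y"
    then have "D (x - y) = 0" using linear_diff[OF lD] by simp
    then have "BB (x - y) (x - y) = BB 0 0" by (metis Binv)
    then have "BB (x - y) (x - y) = 0" by (simp add: BB_def tau_zero)
    then have "x - y = 0" by (rule BB_pos)
    then show "x = y" by simp
  qed
  have "surj D" by (rule linear_inj_imp_surj[OF lD inj])
  then show ?thesis unfolding jordan_automorphism_def using lD inj mul by (simp add: bij_def)
qed

end

theorem theorem5p8:
  fixes p :: "'a::euclidean_space \<Rightarrow> 'a \<Rightarrow> 'a" and e :: 'a and \<Delta> :: "'a \<Rightarrow> 'a"
  assumes "jordan_algebra p"
    and "jordan_unit p e"
    and "formally_real p"
    and "simple_algebra p"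
    and "exceptional p"
    and "two_local_1_automorphism p e \<Delta>"
  shows "jordan_automorphism p \<Delta>"
proof -
  interpret fjalg p e
    using assms(1,2,3) unfolding jordan_algebra_def jordan_unit_def
    by unfold_locales auto
  show ?thesis by (rule main[OF assms(6)])
qed

end
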